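(* Let $(\Omega,\mathcal F)$ be a measurable space with $\Sigma\neq\emptyset$, and let $v:\mathcal F\to\mathbb R$ be a non-decreasing continuous set function with $v(\emptyset)=0$. Then $\lim_{n\to\infty}v(A_n)=v(\bigcup_n A_n)$ for every sequence $A_1\subset A_2\subset\cdots$ in $\mathcal F$, and $\lim_{n\to\infty}v(A_n)=v(\bigcap_n A_n)$ for every sequence $A_1\supset A_2\supset\cdots$ in $\mathcal F$.
   Context: $\Sigma$ denotes the set of all classes $\mathcal I\subset\mathcal F$ that are chains (totally ordered by inclusion), contain $\emptyset$ and $\Omega$, and generate $\mathcal F$ as a $\sigma$-algebra. $v$ is non-decreasing if $v(A)\le v(B)$ for $A\subset B$. For $\mathcal I\in\Sigma$ let $\mathcal J$ be the algebra generated by $\mathcal I$, whose elements are the sets $\bigcup_{i=1}^n (C_i\cap D_i^c)$ with $C_1\supset D_1\supset\cdots\supset C_n\supset D_n$ in $\mathcal I$; define $\mu_{v,\mathcal I}$ on $\mathcal J$ by $\mu_{v,\mathcal I}(\bigcup_{i=1}^n (C_i\cap D_i^c))=\sum_{i=1}^n(v(C_i)-v(D_i))$. A non-decreasing $v$ is called continuous if for every $\mathcal I\in\Sigma$ the finitely additive $\mu_{v,\mathcal I}$ is $\sigma$-additive on $\mathcal J$. *)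

theory Defs
  imports "HOL-Analysis.Analysis"
begin

definition Sigma_chains :: "'a measure \<Rightarrow> 'a set set set" where
  "Sigma_chains M = {I. I \<subseteq> sets M
      \<and> (\<forall>A\<in>I. \<forall>B\<in>I. A \<subseteq> B \<or> B \<subseteq> A)
      \<and> {} \<in> I \<and> space M \<in> I
      \<and> sigma_sets (space M) I = sets M}"

definition chain_rep :: "'a set set \<Rightarrow> nat \<Rightarrow> (nat \<Rightarrow> 'a set) \<Rightarrow> (nat \<Rightarrow> 'a set) \<Rightarrow> bool" where
  "chain_rep I n C D \<longleftrightarrow>
     (\<forall>i<n. C i \<in> I \<and> D i \<in> I \<and> D i \<subseteq> C i) \<and>
     (\<forall>i. Suc i < n \<longrightarrow> C (Suc i) \<subseteq> D i)"

definition gen_alg :: "'a set set \<Rightarrow> 'a set set" where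
  "gen_alg I = {X. \<exists>n C D. chain_rep I n C D \<and> X = (\<Union>i<n. C i - D i)}"

definition mu_vI :: "('a set \<Rightarrow> real) \<Rightarrow> 'a set set \<Rightarrow> 'a set \<Rightarrow> real" where
  "mu_vI v I X = (SOME s. \<exists>n C D. chain_rep I n C D \<and> X = (\<Union>i<n. C i - D i)
                              \<and> s = (\<Sum>i<n. v (C i) - v (D i)))"

definition nondecreasing_sf :: "'a measure \<Rightarrow> ('a set \<Rightarrow> real) \<Rightarrow> bool" where
  "nondecreasing_sf M v \<longleftrightarrow> (\<forall>A\<in>sets M. \<forall>B\<in>sets M. A \<subseteq> B \<longrightarrow> v A \<le> v B)"

definition sigma_additive_on :: "'a set set \<Rightarrow> ('a set \<Rightarrow> real) \<Rightarrow> bool" where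
  "sigma_additive_on J \<mu> \<longleftrightarrow>
     (\<forall>A::nat \<Rightarrow> 'a set. range A \<subseteq> J \<longrightarrow> disjoint_family A \<longrightarrow> (\<Union>i. A i) \<in> J \<longrightarrow>
        (\<lambda>i. \<mu> (A i)) sums \<mu> (\<Union>i. A i))"

definition continuous_sf :: "'a measure \<Rightarrow> ('a set \<Rightarrow> real) \<Rightarrow> bool" where
  "continuous_sf M v \<longleftrightarrow> nondecreasing_sf M v \<and>
     (\<forall>I\<in>Sigma_chains M. sigma_additive_on (gen_alg I) (mu_vI v I))"

end

theory Submission
  imports Defs
begin

lemma chain_rep_below:
  assumes "chain_rep I n C D"
  shows "Suc i < n \<Longrightarrow> C (Suc i) \<subseteq> D 0"
proof (induction i)
  case 0 then show ?case using assms unfolding chain_rep_def by auto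
next
  case (Suc i)
  then have "C (Suc i) \<subseteq> D 0" by simp
  moreover have "D (Suc i) \<subseteq> C (Suc i)" using assms Suc.prems unfolding chain_rep_def by auto
  moreover have "C (Suc (Suc i)) \<subseteq> D (Suc i)" using assms Suc.prems unfolding chain_rep_def by auto
  ultimately show ?case by blast
qed

lemma rep_sum:
  fixes v :: "'a set \<Rightarrow> real"
  assumes ch: "\<forall>A\<in>I. \<forall>B\<in>I. A \<subseteq> B \<or> B \<subseteq> A"
  shows "chain_rep I n C D \<Longrightarrow> K \<in> I \<Longrightarrow> K' \<in> I \<Longrightarrow> K \<subseteq> K' \<Longrightarrow>
    (\<Union>i<n. C i - D i) = K' - K \<Longrightarrow> (\<Sum>i<n. v (C i) - v (D i)) = v K' - v K"
proof (induction n arbitrary: C D K')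
  case 0
  then have "K' = K" by auto
  then show ?case by simp
next
  case (Suc n)
  have rep': "chain_rep I n (\<lambda>i. C (Suc i)) (\<lambda>i. D (Suc i))"
    using Suc.prems(1) unfolding chain_rep_def by auto
  define R where "R = (\<Union>i<n. C (Suc i) - D (Suc i))"
  have U: "(\<Union>i<Suc n. C i - D i) = (C 0 - D 0) \<union> R"
    unfolding R_def lessThan_Suc_eq_insert_0 by auto
  have Rsub: "R \<subseteq> D 0"
    unfolding R_def using chain_rep_below[OF Suc.prems(1)] by fastforce
  have S: "(\<Sum>i<Suc n. v (C i) - v (D i)) = (v (C 0) - v (D 0)) + (\<Sum>i<n. v (C (Suc i)) - v (D (Suc i)))"
    by (rule sum.lessThan_Suc_shift)
  have C0: "C 0 \<in> I" "D 0 \<in> I" "D 0 \<subseteq> C 0" using Suc.prems(1) unfolding chain_rep_def by auto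
  have X: "C 0 - D 0 \<union> R = K' - K" using Suc.prems(5) U by simp
  show ?case
  proof (cases "C 0 = D 0")
    case True
    then have "R = K' - K" using X by auto
    then have "(\<Sum>i<n. v (C (Suc i)) - v (D (Suc i))) = v K' - v K"
      using Suc.IH[OF rep' Suc.prems(2,3,4)] unfolding R_def by simp
    then show ?thesis using S True by simp
  next
    case False
    then obtain x where x: "x \<in> C 0" "x \<notin> D 0" using C0 by blast
    have c1: "C 0 \<subseteq> K' \<or> K' \<subseteq> C 0" using ch C0 Suc.prems(3) by blast
    have c2: "D 0 \<subseteq> K' \<or> K' \<subseteq> D 0" using ch C0 Suc.prems(3) by blast
    have c3: "D 0 \<subseteq> K \<or> K \<subseteq> D 0" using ch C0 Suc.prems(2) by blast
    have f1: "K' - K \<subseteq> C 0" using X Rsub C0 by blast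
    have c4: "C 0 \<subseteq> K \<or> K \<subseteq> C 0" using ch C0 Suc.prems(2) by blast
    have xK: "x \<in> K' - K" using X x by blast
    have f2: "K \<subseteq> C 0" using c4 xK x by blast
    have e1: "K' \<subseteq> C 0" using f1 f2 by blast
    have e2: "C 0 \<subseteq> K'"
    proof (rule ccontr)
      assume a: "\<not> C 0 \<subseteq> K'"
      then obtain z where z: "z \<in> C 0" "z \<notin> K'" by blast
      show False
      proof (cases "D 0 \<subseteq> K'")
        case True
        then have "z \<in> C 0 - D 0" using z by blast
        then show False using X z by blast
      next
        case False
        then have "K' \<subseteq> D 0" using c2 by blast
        then show False using xK x by blast
      qed
    qed
    have e3: "K \<subseteq> D 0"
    proof (rule ccontr)
      assume a: "\<not> K \<subseteq> D 0"
      then obtain y where y: "y \<in> K" "y \<notin> D 0" by blast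
      then have "y \<in> C 0 - D 0" using f2 by blast
      then show False using X y by blast
    qed
    have r1: "R \<subseteq> D 0 - K" using X Rsub by blast
    have r2: "D 0 - K \<subseteq> R"
    proof
      fix w assume w: "w \<in> D 0 - K"
      then have "w \<in> K' - K" using e2 C0 by blast
      then show "w \<in> R" using X w by blast
    qed
    have "R = D 0 - K" using r1 r2 by blast
    then have "(\<Sum>i<n. v (C (Suc i)) - v (D (Suc i))) = v (D 0) - v K"
      using Suc.IH[OF rep' Suc.prems(2) C0(2) e3] unfolding R_def by simp
    then show ?thesis using S e1 e2 by simp
  qed
qed

lemma rep_one:
  assumes "K \<in> I" "K' \<in> I" "K \<subseteq> K'"
  shows "chain_rep I 1 (\<lambda>_. K') (\<lambda>_. K)" "(\<Union>i<(1::nat). K' - K) = K' - K"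
  using assms unfolding chain_rep_def by auto

lemma mu_interval:
  fixes v :: "'a set \<Rightarrow> real"
  assumes ch: "\<forall>A\<in>I. \<forall>B\<in>I. A \<subseteq> B \<or> B \<subseteq> A"
    and "K \<in> I" "K' \<in> I" "K \<subseteq> K'"
  shows "mu_vI v I (K' - K) = v K' - v K"
    and "K' - K \<in> gen_alg I"
proof -
  have ex: "\<exists>s. \<exists>n C D. chain_rep I n C D \<and> K' - K = (\<Union>i<n. C i - D i)
            \<and> s = (\<Sum>i<n. v (C i) - v (D i))"
    apply (rule exI[of _ "v K' - v K"], rule exI[of _ 1], rule exI[of _ "\<lambda>_. K'"], rule exI[of _ "\<lambda>_. K"])
    using rep_one[OF assms(2-4)] by simp
  show "mu_vI v I (K' - K) = v K' - v K"
    unfolding mu_vI_def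
  proof (rule someI2_ex[OF ex])
    fix s assume "\<exists>n C D. chain_rep I n C D \<and> K' - K = (\<Union>i<n. C i - D i) \<and> s = (\<Sum>i<n. v (C i) - v (D i))"
    then obtain n C D where "chain_rep I n C D" "K' - K = (\<Union>i<n. C i - D i)" "s = (\<Sum>i<n. v (C i) - v (D i))"
      by blast
    then show "s = v K' - v K" using rep_sum[OF ch, of n C D K K' v] assms by simp
  qed
  show "K' - K \<in> gen_alg I" unfolding gen_alg_def using ex by blast
qed

lemma chain_build:
  fixes g :: "nat \<Rightarrow> 'a set \<times> 'a set"
  assumes I0: "I0 \<in> Sigma_chains M"
    and sub: "\<And>i. fst (g i) \<in> sets M \<and> snd (g i) \<in> sets M \<and> fst (g i) \<subseteq> snd (g i)"
    and nov: "\<And>i j. g i = g j \<or> snd (g i) \<subseteq> fst (g j) \<or> snd (g j) \<subseteq> fst (g i)"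
    and cov: "(\<Union>i. snd (g i) - fst (g i)) = space M"
    and e: "fst (g i0) = {}" and o: "snd (g i1) = space M"
  shows "{fst (g i) \<union> (C \<inter> snd (g i)) | i C. C \<in> I0} \<in> Sigma_chains M"
    and "\<And>i. fst (g i) \<in> {fst (g i) \<union> (C \<inter> snd (g i)) | i C. C \<in> I0}"
    and "\<And>i. snd (g i) \<in> {fst (g i) \<union> (C \<inter> snd (g i)) | i C. C \<in> I0}"
proof -
  define I where "I = {fst (g i) \<union> (C \<inter> snd (g i)) | i C. C \<in> I0}"
  have I0s: "I0 \<subseteq> sets M" and I0c: "\<forall>A\<in>I0. \<forall>B\<in>I0. A \<subseteq> B \<or> B \<subseteq> A"
    and I0e: "{} \<in> I0" and I0o: "space M \<in> I0" and I0g: "sigma_sets (space M) I0 = sets M"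
    using I0 unfolding Sigma_chains_def by auto
  have sp: "snd (g i) \<subseteq> space M" for i using sub[of i] sets.sets_into_space by blast
  have fstI: "fst (g i) \<in> I" for i
    unfolding I_def using I0e by blast
  have sndI: "snd (g i) \<in> I" for i
  proof -
    have "snd (g i) = fst (g i) \<union> (space M \<inter> snd (g i))" using sub[of i] sp[of i] by blast
    then show ?thesis unfolding I_def using I0o by blast
  qed
  show "\<And>i. fst (g i) \<in> {fst (g i) \<union> (C \<inter> snd (g i)) | i C. C \<in> I0}"
    using fstI unfolding I_def by blast
  show "\<And>i. snd (g i) \<in> {fst (g i) \<union> (C \<inter> snd (g i)) | i C. C \<in> I0}"
    using sndI unfolding I_def by blast
  have Is: "I \<subseteq> sets M"
  proof
    fix X assume "X \<in> I"
    then obtain i C where "C \<in> I0" "X = fst (g i) \<union> (C \<inter> snd (g i))" unfolding I_def by blast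
    then show "X \<in> sets M" using sub[of i] I0s by blast
  qed
  have Ic: "\<forall>A\<in>I. \<forall>B\<in>I. A \<subseteq> B \<or> B \<subseteq> A"
  proof (intro ballI)
    fix A B assume "A \<in> I" "B \<in> I"
    then obtain i C j C' where C: "C \<in> I0" "A = fst (g i) \<union> (C \<inter> snd (g i))"
      and C': "C' \<in> I0" "B = fst (g j) \<union> (C' \<inter> snd (g j))" unfolding I_def by blast
    have "A \<subseteq> snd (g i)" "fst (g i) \<subseteq> A" "B \<subseteq> snd (g j)" "fst (g j) \<subseteq> B"
      using C C' sub[of i] sub[of j] by auto
    moreover have "C \<subseteq> C' \<or> C' \<subseteq> C" using I0c C C' by blast
    ultimately show "A \<subseteq> B \<or> B \<subseteq> A" using nov[of i j] C C' by auto
  qed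
  have "sigma_sets (space M) I = sets M"
  proof
    show "sigma_sets (space M) I \<subseteq> sets M"
      using sets.sigma_algebra_axioms Is by (rule sigma_algebra.sigma_sets_subset)
    have sa: "sigma_algebra (space M) (sigma_sets (space M) I)"
      using Is sets.sets_into_space by (intro sigma_algebra_sigma_sets) auto
    interpret S: sigma_algebra "space M" "sigma_sets (space M) I" by (rule sa)
    have "I0 \<subseteq> sigma_sets (space M) I"
    proof
      fix C assume C: "C \<in> I0"
      have Csp: "C \<subseteq> space M" using C I0s sets.sets_into_space by blast
      have piece: "fst (g i) \<union> (C \<inter> snd (g i)) - fst (g i) \<in> sigma_sets (space M) I" for i
      proof -
        have "fst (g i) \<union> (C \<inter> snd (g i)) \<in> I" unfolding I_def using C by blast
        then show ?thesis using fstI[of i] by (intro S.Diff) auto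
      qed
      have "C = (\<Union>i. fst (g i) \<union> (C \<inter> snd (g i)) - fst (g i))"
        using cov Csp by auto
      also have "\<dots> \<in> sigma_sets (space M) I"
        using piece by (intro S.countable_UN') auto
      finally show "C \<in> sigma_sets (space M) I" .
    qed
    then have "sigma_sets (space M) I0 \<subseteq> sigma_sets (space M) I"
      by (rule sigma_sets_mono)
    then show "sets M \<subseteq> sigma_sets (space M) I" using I0g by simp
  qed
  moreover have "{} \<in> I" using fstI[of i0] e by simp
  moreover have "space M \<in> I" using sndI[of i1] o by simp
  ultimately show "{fst (g i) \<union> (C \<inter> snd (g i)) | i C. C \<in> I0} \<in> Sigma_chains M"
    using Is Ic unfolding Sigma_chains_def I_def by blast
qed

lemma inc_case:
  fixes v :: "'a set \<Rightarrow> real" and A :: "nat \<Rightarrow> 'a set"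
  assumes I0: "I0 \<in> Sigma_chains M" and cont: "continuous_sf M v" and v0: "v {} = 0"
    and As: "range A \<subseteq> sets M" and inc: "incseq A"
  shows "(\<lambda>n. v (A n)) \<longlonglongrightarrow> v (\<Union>n. A n)"
proof -
  define U where "U = (\<Union>n. A n)"
  define g :: "nat \<Rightarrow> 'a set \<times> 'a set" where
    "g = case_nat (U, space M) (case_nat ({}, A 0) (\<lambda>n. (A n, A (Suc n))))"
  have g0: "g 0 = (U, space M)" and g1: "g (Suc 0) = ({}, A 0)"
    and g2: "g (Suc (Suc n)) = (A n, A (Suc n))" for n unfolding g_def by simp_all
  have Us: "U \<in> sets M" unfolding U_def using As by blast
  have Asp: "A n \<subseteq> space M" for n using As sets.sets_into_space by blast
  have Uall: "A n \<subseteq> U" for n unfolding U_def by blast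
  have mono: "m \<le> n \<Longrightarrow> A m \<subseteq> A n" for m n using inc unfolding incseq_def by blast
  have gcases: "i = 0 \<or> i = Suc 0 \<or> (\<exists>n. i = Suc (Suc n))" for i
    by (metis not0_implies_Suc)
  have sub: "fst (g i) \<in> sets M \<and> snd (g i) \<in> sets M \<and> fst (g i) \<subseteq> snd (g i)" for i
  proof -
    have st: "A n \<subseteq> A (Suc n)" for n using mono by simp
    have Usp: "U \<subseteq> space M" using Us sets.sets_into_space by blast
    have An: "A n \<in> sets M" for n using As by blast
    consider "i = 0" | "i = Suc 0" | n where "i = Suc (Suc n)" using gcases[of i] by blast
    then show ?thesis
    proof cases
      case 1 then show ?thesis using g0 Us Usp by simp
    next
      case 2 then show ?thesis using g1 An by simp
    next
      case 3 then show ?thesis using g2 An st by simp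
    qed
  qed
  have nov: "g i = g j \<or> snd (g i) \<subseteq> fst (g j) \<or> snd (g j) \<subseteq> fst (g i)" for i j
  proof -
    have a: "n < m \<Longrightarrow> A (Suc n) \<subseteq> A m" for n m using mono by simp
    have b: "A n \<subseteq> space M" "A n \<subseteq> U" for n using Asp Uall by auto
    have c: "\<And>n m. A (Suc n) \<subseteq> A m \<or> A (Suc m) \<subseteq> A n \<or> n = m"
      using a by (metis linorder_neqE_nat)
    have d: "A 0 \<subseteq> A m" for m using mono by simp
    consider "i = 0" | "i = Suc 0" | n where "i = Suc (Suc n)" using gcases[of i] by blast
    then show ?thesis
    proof cases
      case 1
      consider "j = 0" | "j = Suc 0" | m where "j = Suc (Suc m)" using gcases[of j] by blast
      then show ?thesis by cases (simp_all add: 1 g0 g1 g2 b)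
    next
      case 2
      consider "j = 0" | "j = Suc 0" | m where "j = Suc (Suc m)" using gcases[of j] by blast
      then show ?thesis by cases (simp_all add: 2 g0 g1 g2 b d)
    next
      case 3
      consider "j = 0" | "j = Suc 0" | m where "j = Suc (Suc m)" using gcases[of j] by blast
      then show ?thesis
      proof cases
        case (3 m) then show ?thesis using c[of n m] \<open>i = Suc (Suc n)\<close> g2 by auto
      qed (simp_all add: 3 g0 g1 g2 b d)
    qed
  qed
  have cov: "(\<Union>i. snd (g i) - fst (g i)) = space M"
  proof
    show "(\<Union>i. snd (g i) - fst (g i)) \<subseteq> space M" using sub sets.sets_into_space by blast
    show "space M \<subseteq> (\<Union>i. snd (g i) - fst (g i))"
    proof
      fix x assume x: "x \<in> space M"
      show "x \<in> (\<Union>i. snd (g i) - fst (g i))"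
      proof (cases "x \<in> U")
        case False then show ?thesis using x g0 by (intro UN_I[of 0]) auto
      next
        case True
        show ?thesis
        proof (cases "x \<in> A 0")
          case True then show ?thesis using g1 by (intro UN_I[of "Suc 0"]) auto
        next
          case False
          then obtain n where "x \<notin> A n" "x \<in> A (Suc n)"
            using exists_least_lemma[of "\<lambda>n. x \<in> A n"] \<open>x \<in> U\<close> unfolding U_def by blast
          then show ?thesis using g2 by (intro UN_I[of "Suc (Suc n)"]) auto
        qed
      qed
    qed
  qed
  define I where "I = {fst (g i) \<union> (C \<inter> snd (g i)) | i C. C \<in> I0}"
  have IS: "I \<in> Sigma_chains M"
    and fI: "\<And>i. fst (g i) \<in> I" and sI: "\<And>i. snd (g i) \<in> I"
    using chain_build[OF I0 sub nov cov, of 1 0] g0 g1 unfolding I_def by auto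
  have ch: "\<forall>A\<in>I. \<forall>B\<in>I. A \<subseteq> B \<or> B \<subseteq> A" using IS unfolding Sigma_chains_def by blast
  have sa: "sigma_additive_on (gen_alg I) (mu_vI v I)"
    using cont IS unfolding continuous_sf_def by blast
  define P where "P i = snd (g (Suc i)) - fst (g (Suc i))" for i
  have muP: "mu_vI v I (P i) = v (snd (g (Suc i))) - v (fst (g (Suc i)))"
    and PJ: "P i \<in> gen_alg I" for i
    unfolding P_def using mu_interval[OF ch fI sI sub[THEN conjunct2, THEN conjunct2]] by auto
  have Pi: "P i = A i - (case i of 0 \<Rightarrow> {} | Suc n \<Rightarrow> A n)" for i
    unfolding P_def by (cases i) (simp_all add: g1 g2)
  have P0: "P 0 = A 0" and PS: "P (Suc n) = A (Suc n) - A n" for n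
    unfolding P_def by (simp_all add: g1 g2)
  have disj: "disjoint_family P"
    unfolding disjoint_family_on_def
  proof (intro ballI impI)
    fix i j :: nat assume "i \<noteq> j"
    then consider "i < j" | "j < i" by linarith
    then show "P i \<inter> P j = {}"
    proof cases
      case 1 then obtain k where "j = Suc k" "i \<le> k" by (cases j) auto
      then show ?thesis using mono[of i k] Pi[of i] Pi[of j] by auto
    next
      case 2 then obtain k where "i = Suc k" "j \<le> k" by (cases i) auto
      then show ?thesis using mono[of j k] Pi[of i] Pi[of j] by auto
    qed
  qed
  have UP: "(\<Union>i. P i) = fst (g 0) - fst (g (Suc 0))"
  proof
    have "P i \<subseteq> U \<inter> space M" for i using Pi[of i] Uall[of i] Asp[of i] by blast
    then show "(\<Union>i. P i) \<subseteq> fst (g 0) - fst (g (Suc 0))" using g0 g1 by auto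
    show "fst (g 0) - fst (g (Suc 0)) \<subseteq> (\<Union>i. P i)"
    proof
      fix x assume "x \<in> fst (g 0) - fst (g (Suc 0))"
      then have "x \<in> U" using g0 by simp
      show "x \<in> (\<Union>i. P i)"
      proof (cases "x \<in> A 0")
        case True then have "x \<in> P 0" using P0 by simp
        then show ?thesis by blast
      next
        case False
        then obtain n where "x \<notin> A n" "x \<in> A (Suc n)"
          using exists_least_lemma[of "\<lambda>n. x \<in> A n"] \<open>x \<in> U\<close> unfolding U_def by blast
        then have "x \<in> P (Suc n)" using PS by simp
        then show ?thesis by blast
      qed
    qed
  qed
  have muU: "mu_vI v I (\<Union>i. P i) = v U" and UJ: "(\<Union>i. P i) \<in> gen_alg I"
    unfolding UP using mu_interval[OF ch fI[of "Suc 0"] fI[of 0]] g0 g1 v0 by auto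
  have sums: "(\<lambda>i. mu_vI v I (P i)) sums v U"
  proof -
    have "range P \<subseteq> gen_alg I" using PJ by blast
    then have "(\<lambda>i. mu_vI v I (P i)) sums mu_vI v I (\<Union>i. P i)"
      using sa disj UJ unfolding sigma_additive_on_def by blast
    then show ?thesis using muU by simp
  qed
  have ps: "(\<Sum>i<Suc N. mu_vI v I (P i)) = v (A N)" for N
  proof (induction N)
    case 0 then show ?case using muP[of 0] g1 v0 by simp
  next
    case (Suc N) then show ?case using muP[of "Suc N"] g2 by simp
  qed
  have "(\<lambda>N. \<Sum>i<N. mu_vI v I (P i)) \<longlonglongrightarrow> v U" using sums unfolding sums_def .
  from LIMSEQ_Suc[OF this] show ?thesis unfolding ps U_def .
qed

lemma dec_case:
  fixes v :: "'a set \<Rightarrow> real" and B :: "nat \<Rightarrow> 'a set"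
  assumes I0: "I0 \<in> Sigma_chains M" and cont: "continuous_sf M v"
    and Bs: "range B \<subseteq> sets M" and dec: "decseq B"
  shows "(\<lambda>n. v (B n)) \<longlonglongrightarrow> v (\<Inter>n. B n)"
proof -
  define L where "L = (\<Inter>n. B n)"
  define g :: "nat \<Rightarrow> 'a set \<times> 'a set" where
    "g = case_nat (B 0, space M) (case_nat ({}, L) (\<lambda>n. (B (Suc n), B n)))"
  have g0: "g 0 = (B 0, space M)" and g1: "g (Suc 0) = ({}, L)"
    and g2: "g (Suc (Suc n)) = (B (Suc n), B n)" for n unfolding g_def by simp_all
  have Ls: "L \<in> sets M" unfolding L_def using Bs by (intro sets.countable_INT) auto
  have Bn: "B n \<in> sets M" for n using Bs by blast
  have Bsp: "B n \<subseteq> space M" for n using Bn sets.sets_into_space by blast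
  have Lall: "L \<subseteq> B n" for n unfolding L_def by blast
  have mono: "m \<le> n \<Longrightarrow> B n \<subseteq> B m" for m n using dec unfolding decseq_def by blast
  have st: "B (Suc n) \<subseteq> B n" for n using mono by simp
  have gcases: "i = 0 \<or> i = Suc 0 \<or> (\<exists>n. i = Suc (Suc n))" for i
    by (metis not0_implies_Suc)
  have sub: "fst (g i) \<in> sets M \<and> snd (g i) \<in> sets M \<and> fst (g i) \<subseteq> snd (g i)" for i
  proof -
    consider "i = 0" | "i = Suc 0" | n where "i = Suc (Suc n)" using gcases[of i] by blast
    then show ?thesis
    proof cases
      case 1 then show ?thesis using g0 Bn Bsp by simp
    next
      case 2 then show ?thesis using g1 Ls by simp
    next
      case 3 then show ?thesis using g2 Bn st by simp
    qed
  qed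
  have nov: "g i = g j \<or> snd (g i) \<subseteq> fst (g j) \<or> snd (g j) \<subseteq> fst (g i)" for i j
  proof -
    have a: "n < m \<Longrightarrow> B m \<subseteq> B (Suc n)" for n m using mono by simp
    have c: "\<And>n m. B m \<subseteq> B (Suc n) \<or> B n \<subseteq> B (Suc m) \<or> n = m"
      using a by (metis linorder_neqE_nat)
    have d: "B m \<subseteq> B 0" for m using mono by simp
    have e: "L \<subseteq> B (Suc m)" for m using Lall by blast
    have f: "L \<subseteq> B 0" using Lall by blast
    consider "i = 0" | "i = Suc 0" | n where "i = Suc (Suc n)" using gcases[of i] by blast
    then show ?thesis
    proof cases
      case 1
      consider "j = 0" | "j = Suc 0" | m where "j = Suc (Suc m)" using gcases[of j] by blast
      then show ?thesis by cases (simp_all add: 1 g0 g1 g2 d f)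
    next
      case 2
      consider "j = 0" | "j = Suc 0" | m where "j = Suc (Suc m)" using gcases[of j] by blast
      then show ?thesis by cases (simp_all add: 2 g0 g1 g2 e f)
    next
      case 3
      consider "j = 0" | "j = Suc 0" | m where "j = Suc (Suc m)" using gcases[of j] by blast
      then show ?thesis
      proof cases
        case (3 m) then show ?thesis using c[of n m] \<open>i = Suc (Suc n)\<close> g2 by auto
      qed (simp_all add: 3 g0 g1 g2 d e)
    qed
  qed
  have cov: "(\<Union>i. snd (g i) - fst (g i)) = space M"
  proof
    show "(\<Union>i. snd (g i) - fst (g i)) \<subseteq> space M" using sub sets.sets_into_space by blast
    show "space M \<subseteq> (\<Union>i. snd (g i) - fst (g i))"
    proof
      fix x assume x: "x \<in> space M"
      show "x \<in> (\<Union>i. snd (g i) - fst (g i))"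
      proof (cases "x \<in> B 0")
        case False then show ?thesis using x g0 by (intro UN_I[of 0]) auto
      next
        case True
        show ?thesis
        proof (cases "x \<in> L")
          case True then show ?thesis using g1 by (intro UN_I[of "Suc 0"]) auto
        next
          case False
          then have "\<exists>n. x \<notin> B n" unfolding L_def by blast
          then obtain n where "x \<in> B n" "x \<notin> B (Suc n)"
            using exists_least_lemma[of "\<lambda>n. x \<notin> B n"] \<open>x \<in> B 0\<close> by blast
          then show ?thesis using g2 by (intro UN_I[of "Suc (Suc n)"]) auto
        qed
      qed
    qed
  qed
  define I where "I = {fst (g i) \<union> (C \<inter> snd (g i)) | i C. C \<in> I0}"
  have IS: "I \<in> Sigma_chains M"
    and fI: "\<And>i. fst (g i) \<in> I" and sI: "\<And>i. snd (g i) \<in> I"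
    using chain_build[OF I0 sub nov cov, of 1 0] g0 g1 unfolding I_def by auto
  have ch: "\<forall>A\<in>I. \<forall>B\<in>I. A \<subseteq> B \<or> B \<subseteq> A" using IS unfolding Sigma_chains_def by blast
  have sa: "sigma_additive_on (gen_alg I) (mu_vI v I)"
    using cont IS unfolding continuous_sf_def by blast
  define P where "P i = snd (g (Suc (Suc i))) - fst (g (Suc (Suc i)))" for i
  have muP: "mu_vI v I (P i) = v (snd (g (Suc (Suc i)))) - v (fst (g (Suc (Suc i))))"
    and PJ: "P i \<in> gen_alg I" for i
    unfolding P_def using mu_interval[OF ch fI sI sub[THEN conjunct2, THEN conjunct2]] by auto
  have Pi: "P i = B i - B (Suc i)" for i unfolding P_def by (simp add: g2)
  have muP': "mu_vI v I (P i) = v (B i) - v (B (Suc i))" for i using muP[of i] g2 by simp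
  have disj: "disjoint_family P"
    unfolding disjoint_family_on_def
  proof (intro ballI impI)
    fix i j :: nat assume "i \<noteq> j"
    then consider "i < j" | "j < i" by linarith
    then show "P i \<inter> P j = {}"
    proof cases
      case 1 then have "B j \<subseteq> B (Suc i)" using mono by simp
      then show ?thesis using Pi[of i] Pi[of j] by auto
    next
      case 2 then have "B i \<subseteq> B (Suc j)" using mono by simp
      then show ?thesis using Pi[of i] Pi[of j] by auto
    qed
  qed
  have UP: "(\<Union>i. P i) = fst (g 0) - snd (g (Suc 0))"
  proof
    have "P i \<subseteq> B 0 - L" for i using Pi[of i] mono[of 0 i] Lall[of "Suc i"] by blast
    then show "(\<Union>i. P i) \<subseteq> fst (g 0) - snd (g (Suc 0))" using g0 g1 by auto
    show "fst (g 0) - snd (g (Suc 0)) \<subseteq> (\<Union>i. P i)"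
    proof
      fix x assume "x \<in> fst (g 0) - snd (g (Suc 0))"
      then have x0: "x \<in> B 0" and "x \<notin> L" using g0 g1 by auto
      then have "\<exists>n. x \<notin> B n" unfolding L_def by blast
      then obtain n where "x \<in> B n" "x \<notin> B (Suc n)"
        using exists_least_lemma[of "\<lambda>n. x \<notin> B n"] x0 by blast
      then have "x \<in> P n" using Pi by simp
      then show "x \<in> (\<Union>i. P i)" by blast
    qed
  qed
  have muU: "mu_vI v I (\<Union>i. P i) = v (B 0) - v L" and UJ: "(\<Union>i. P i) \<in> gen_alg I"
    unfolding UP using mu_interval[OF ch sI[of "Suc 0"] fI[of 0]] g0 g1 Lall[of 0] by auto
  have sums: "(\<lambda>i. mu_vI v I (P i)) sums (v (B 0) - v L)"
  proof -
    have "range P \<subseteq> gen_alg I" using PJ by blast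
    then have "(\<lambda>i. mu_vI v I (P i)) sums mu_vI v I (\<Union>i. P i)"
      using sa disj UJ unfolding sigma_additive_on_def by blast
    then show ?thesis using muU by simp
  qed
  have ps: "(\<Sum>i<N. mu_vI v I (P i)) = v (B 0) - v (B N)" for N
    unfolding muP' by (rule sum_lessThan_telescope')
  have "(\<lambda>N. \<Sum>i<N. mu_vI v I (P i)) \<longlonglongrightarrow> v (B 0) - v L" using sums unfolding sums_def .
  then have "(\<lambda>N. v (B 0) - v (B N)) \<longlonglongrightarrow> v (B 0) - v L" unfolding ps .
  from tendsto_diff[OF tendsto_const this]
  have "(\<lambda>N. v (B 0) - (v (B 0) - v (B N))) \<longlonglongrightarrow> v (B 0) - (v (B 0) - v L)" .
  then show ?thesis unfolding L_def by simp
qed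

theorem proposition3:
  fixes M :: "'a measure" and v :: "'a set \<Rightarrow> real"
  assumes "Sigma_chains M \<noteq> {}"
    and "nondecreasing_sf M v"
    and "continuous_sf M v"
    and "v {} = 0"
  shows "(\<forall>A::nat \<Rightarrow> 'a set. range A \<subseteq> sets M \<longrightarrow> incseq A \<longrightarrow>
            (\<lambda>n. v (A n)) \<longlonglongrightarrow> v (\<Union>n. A n))
       \<and> (\<forall>A::nat \<Rightarrow> 'a set. range A \<subseteq> sets M \<longrightarrow> decseq A \<longrightarrow>
            (\<lambda>n. v (A n)) \<longlonglongrightarrow> v (\<Inter>n. A n))"
proof -
  obtain I0 where I0: "I0 \<in> Sigma_chains M" using assms(1) by blast
  show ?thesis using inc_case[OF I0 assms(3) assms(4)] dec_case[OF I0 assms(3)] by blast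
qed

end
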